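(* Let $\mathcal{T}=(\mathcal{V},\mathcal{E})$ obey the LC-PF model and covariance assumption of the context, and let $k_1$ be as defined there. Let $\mathcal{E}_{full}\supseteq\mathcal{E}$ be a set of candidate edges on $\mathcal{V}$. Suppose that for all $a\neq b$ in $\mathcal{V}$, real numbers $\hat\phi_{ab}$ (empirical estimates) satisfy $|\hat\phi_{ab}-\phi_{ab}|<k_1/2$. Then the minimum weight spanning tree of $(\mathcal{V},\mathcal{E}_{full})$ with edge weights $\hat\phi_{ab}$ (the output of Algorithm 1) has edge set exactly $\mathcal{E}$.
   Context: $\mathcal{T}=(\mathcal{V},\mathcal{E})$ is a tree with a distinguished root (substation) of degree one. Each edge $(ab)$ has resistance $r_{ab}>0$ and reactance $x_{ab}>0$; $r_{\min},x_{\min}$ denote their minimum values. Let $H_{1/r},H_{1/x}$ be the weighted Laplacians with edge weights $1/r_{ab}$, $1/x_{ab}$, with the root row and column removed. Non-root nodes have random injections $p_a,q_a$. The LC-PF model gives $v=H_{1/r}^{-1}p+H_{1/x}^{-1}q$ and $\theta=H_{1/x}^{-1}p-H_{1/r}^{-1}q$; the root voltage is constant. Covariance assumption: $\Omega_p,\Omega_q$ are the covariances of $p,q$, and $\Omega_{pq}=\mathbb{E}[(p-\mathbb{E}p)(q-\mathbb{E}q)^T]=\Omega_{qp}^T$. For distinct non-root $a,b$, $\Omega_p(a,b)=\Omega_q(a,b)=\Omega_{qp}(a,b)=0$, and $\Omega_{qp}(a,a)\ge0$. Define $\phi_{ab}=\mathbb{E}[((v_a-\mathbb{E}v_a)-(v_b-\mathbb{E}v_b))^2]$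 and $k_1=\min(r_{\min}^2,x_{\min}^2)\min_{d}\big(\Omega_p(d,d)+\Omega_q(d,d)+2\Omega_{pq}(d,d)\big)$, the inner minimum being over non-root nodes $d$. *)

theory Defs
  imports "HOL-Probability.Probability"
begin

definition adj :: "'v set set \<Rightarrow> ('v \<times> 'v) set" where
  "adj E = {(a, b). {a, b} \<in> E}"

definition graph_on :: "'v set \<Rightarrow> 'v set set \<Rightarrow> bool" where
  "graph_on V E \<longleftrightarrow> (\<forall>e\<in>E. \<exists>a b. a \<in> V \<and> b \<in> V \<and> a \<noteq> b \<and> e = {a, b})"

definition connected_on :: "'v set \<Rightarrow> 'v set set \<Rightarrow> bool" where
  "connected_on V E \<longleftrightarrow> (\<forall>a\<in>V. \<forall>b\<in>V. (a, b) \<in> (adj E)\<^sup>*)"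

definition is_tree :: "'v set \<Rightarrow> 'v set set \<Rightarrow> bool" where
  "is_tree V E \<longleftrightarrow> finite V \<and> V \<noteq> {} \<and> graph_on V E \<and> connected_on V E \<and> card E = card V - 1"

definition degree :: "'v set set \<Rightarrow> 'v \<Rightarrow> nat" where
  "degree E a = card {e \<in> E. a \<in> e}"

definition is_spanning_tree :: "'v set \<Rightarrow> 'v set set \<Rightarrow> 'v set set \<Rightarrow> bool" where
  "is_spanning_tree V Ef F \<longleftrightarrow> F \<subseteq> Ef \<and> is_tree V F"

definition is_MST :: "'v set \<Rightarrow> 'v set set \<Rightarrow> ('v set \<Rightarrow> real) \<Rightarrow> 'v set set \<Rightarrow> bool" where
  "is_MST V Ef w F \<longleftrightarrow> is_spanning_tree V Ef F \<and>
     (\<forall>F'. is_spanning_tree V Ef F' \<longrightarrow> (\<Sum>e\<in>F. w e) \<le> (\<Sum>e\<in>F'. w e))"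

definition red_laplacian :: "'v set \<Rightarrow> 'v \<Rightarrow> 'v set set \<Rightarrow> ('v set \<Rightarrow> real) \<Rightarrow> 'v \<Rightarrow> 'v \<Rightarrow> real" where
  "red_laplacian V rt E w a b =
     (if a \<in> V - {rt} \<and> b \<in> V - {rt} then
        (if a = b then (\<Sum>e\<in>{e \<in> E. a \<in> e}. 1 / w e)
         else if {a, b} \<in> E then - (1 / w {a, b}) else 0)
      else 0)"

definition inv_on :: "'v set \<Rightarrow> ('v \<Rightarrow> 'v \<Rightarrow> real) \<Rightarrow> 'v \<Rightarrow> 'v \<Rightarrow> real" where
  "inv_on V0 H = (THE G. (\<forall>a\<in>V0. \<forall>b\<in>V0. (\<Sum>c\<in>V0. H a c * G c b) = (if a = b then 1 else 0))
                      \<and> (\<forall>a b. a \<notin> V0 \<or> b \<notin> V0 \<longrightarrow> G a b = 0))"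

definition lcpf_voltage :: "'v set \<Rightarrow> 'v \<Rightarrow> 'v set set \<Rightarrow> ('v set \<Rightarrow> real) \<Rightarrow> ('v set \<Rightarrow> real)
    \<Rightarrow> real \<Rightarrow> ('v \<Rightarrow> 'w \<Rightarrow> real) \<Rightarrow> ('v \<Rightarrow> 'w \<Rightarrow> real) \<Rightarrow> 'v \<Rightarrow> 'w \<Rightarrow> real" where
  "lcpf_voltage V rt E r x v0 p q a \<omega> =
     (if a = rt then v0 else
        (\<Sum>d\<in>V - {rt}. inv_on (V - {rt}) (red_laplacian V rt E r) a d * p d \<omega>
                        + inv_on (V - {rt}) (red_laplacian V rt E x) a d * q d \<omega>))"

definition cov :: "'w measure \<Rightarrow> ('w \<Rightarrow> real) \<Rightarrow> ('w \<Rightarrow> real) \<Rightarrow> real" where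
  "cov M X Y = (\<integral>\<omega>. (X \<omega> - (\<integral>\<omega>'. X \<omega>' \<partial>M)) * (Y \<omega> - (\<integral>\<omega>'. Y \<omega>' \<partial>M)) \<partial>M)"

definition phi :: "'w measure \<Rightarrow> ('v \<Rightarrow> 'w \<Rightarrow> real) \<Rightarrow> 'v \<Rightarrow> 'v \<Rightarrow> real" where
  "phi M v a b = (\<integral>\<omega>. ((v a \<omega> - (\<integral>\<omega>'. v a \<omega>' \<partial>M)) - (v b \<omega> - (\<integral>\<omega>'. v b \<omega>' \<partial>M)))\<^sup>2 \<partial>M)"

definition k1 :: "'v set \<Rightarrow> 'v \<Rightarrow> 'v set set \<Rightarrow> ('v set \<Rightarrow> real) \<Rightarrow> ('v set \<Rightarrow> real)
    \<Rightarrow> 'w measure \<Rightarrow> ('v \<Rightarrow> 'w \<Rightarrow> real) \<Rightarrow> ('v \<Rightarrow> 'w \<Rightarrow> real) \<Rightarrow> real" where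
  "k1 V rt E r x M p q =
     min ((Min (r ` E))\<^sup>2) ((Min (x ` E))\<^sup>2) *
     Min ((\<lambda>d. cov M (p d) (p d) + cov M (q d) (q d) + 2 * cov M (p d) (q d)) ` (V - {rt}))"

end

theory Submission
  imports Defs
begin

lemma adj_iff: "(a, b) \<in> adj G \<longleftrightarrow> {a, b} \<in> G"
  by (simp add: adj_def)

lemma adj_sym: "(a, b) \<in> adj G \<Longrightarrow> (b, a) \<in> adj G"
  by (simp add: adj_def insert_commute)

lemma rtr_sym: "(a, b) \<in> (adj G)\<^sup>* \<Longrightarrow> (b, a) \<in> (adj G)\<^sup>*"
proof (induction rule: rtrancl_induct)
  case base then show ?case by simp
next
  case (step y z)
  then show ?case using adj_sym by (meson converse_rtrancl_into_rtrancl)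
qed

lemma rtr_mono: "G \<subseteq> G' \<Longrightarrow> (a, b) \<in> (adj G)\<^sup>* \<Longrightarrow> (a, b) \<in> (adj G')\<^sup>*"
proof -
  assume "G \<subseteq> G'" "(a, b) \<in> (adj G)\<^sup>*"
  moreover have "adj G \<subseteq> adj G'" using \<open>G \<subseteq> G'\<close> by (auto simp: adj_def)
  ultimately show ?thesis using rtrancl_mono by blast
qed

lemma remove_edge_or:
  assumes "(a, u) \<in> (adj F)\<^sup>*" "f = {a, b}"
  shows "(a, u) \<in> (adj (F - {f}))\<^sup>* \<or> (b, u) \<in> (adj (F - {f}))\<^sup>*"
  using assms(1)
proof (induction rule: rtrancl_induct)
  case base then show ?case by simp
next
  case (step y z)
  show ?case
  proof (cases "{y, z} = f")
    case True
    then have "z = a \<or> z = b" using assms(2) by (auto simp: doubleton_eq_iff)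
    then show ?thesis by auto
  next
    case False
    then have "(y, z) \<in> adj (F - {f})" using step(2) by (simp add: adj_iff)
    then show ?thesis using step(3) by (auto intro: rtrancl.rtrancl_into_rtrancl)
  qed
qed

lemma graph_on_finite: "graph_on V G \<Longrightarrow> finite V \<Longrightarrow> finite G"
proof -
  assume g: "graph_on V G" and f: "finite V"
  have "G \<subseteq> Pow V" using g unfolding graph_on_def by auto
  then show "finite G" using f by (meson finite_Pow_iff finite_subset)
qed

definition rdist :: "'v set set \<Rightarrow> 'v \<Rightarrow> 'v \<Rightarrow> nat" where
  "rdist G r0 v = (LEAST n. (r0, v) \<in> (adj G) ^^ n)"

definition rpar :: "'v set set \<Rightarrow> 'v \<Rightarrow> 'v \<Rightarrow> 'v" where
  "rpar G r0 v = (SOME u. {u, v} \<in> G \<and> rdist G r0 u + 1 = rdist G r0 v)"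

lemma rdist_pow: "(r0, v) \<in> (adj G)\<^sup>* \<Longrightarrow> (r0, v) \<in> (adj G) ^^ rdist G r0 v"
proof -
  assume "(r0, v) \<in> (adj G)\<^sup>*"
  then obtain n where "(r0, v) \<in> (adj G) ^^ n" using rtrancl_power by blast
  then show ?thesis unfolding rdist_def by (rule LeastI)
qed

lemma rdist_le: "(r0, v) \<in> (adj G) ^^ n \<Longrightarrow> rdist G r0 v \<le> n"
  unfolding rdist_def by (simp add: Least_le)

lemma rdist_0: "(r0, v) \<in> (adj G)\<^sup>* \<Longrightarrow> rdist G r0 v = 0 \<longleftrightarrow> v = r0"
proof
  assume "(r0, v) \<in> (adj G)\<^sup>*" "rdist G r0 v = 0"
  then have "(r0, v) \<in> (adj G) ^^ 0" using rdist_pow by metis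
  then show "v = r0" by simp
next
  assume "v = r0"
  have "(r0, r0) \<in> (adj G) ^^ 0" by simp
  then have "rdist G r0 r0 \<le> 0" by (rule rdist_le)
  then show "rdist G r0 v = 0" using \<open>v = r0\<close> by simp
qed

lemma rdist_edge:
  assumes "(r0, u) \<in> (adj G)\<^sup>*" "{u, v} \<in> G"
  shows "rdist G r0 v \<le> rdist G r0 u + 1"
proof -
  have "(r0, u) \<in> (adj G) ^^ rdist G r0 u" using rdist_pow assms(1) .
  moreover have "(u, v) \<in> adj G" using assms(2) by (simp add: adj_iff)
  ultimately have "(r0, v) \<in> (adj G) ^^ Suc (rdist G r0 u)" by auto
  then show ?thesis using rdist_le by fastforce
qed

lemma rpar_ex:
  assumes "(r0, v) \<in> (adj G)\<^sup>*" "v \<noteq> r0"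
  shows "\<exists>u. {u, v} \<in> G \<and> rdist G r0 u + 1 = rdist G r0 v \<and> (r0, u) \<in> (adj G)\<^sup>*"
proof -
  have d: "rdist G r0 v \<noteq> 0" using rdist_0[OF assms(1)] assms(2) by simp
  then obtain k where k: "rdist G r0 v = Suc k" by (cases "rdist G r0 v") auto
  have "(r0, v) \<in> (adj G) ^^ Suc k" using rdist_pow[OF assms(1)] k by simp
  then obtain u where u: "(r0, u) \<in> (adj G) ^^ k" "(u, v) \<in> adj G" by auto
  have ru: "(r0, u) \<in> (adj G)\<^sup>*" using u(1) relpow_imp_rtrancl by blast
  have "rdist G r0 u \<le> k" using rdist_le u(1) .
  moreover have "rdist G r0 v \<le> rdist G r0 u + 1" using rdist_edge[OF ru] u(2) by (simp add: adj_iff)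
  ultimately have "rdist G r0 u + 1 = rdist G r0 v" using k by simp
  then show ?thesis using u(2) ru by (auto simp: adj_iff)
qed

lemma rpar:
  assumes "(r0, v) \<in> (adj G)\<^sup>*" "v \<noteq> r0"
  shows "{rpar G r0 v, v} \<in> G" "rdist G r0 (rpar G r0 v) + 1 = rdist G r0 v"
proof -
  have "\<exists>u. {u, v} \<in> G \<and> rdist G r0 u + 1 = rdist G r0 v" using rpar_ex[OF assms] by blast
  then have "{rpar G r0 v, v} \<in> G \<and> rdist G r0 (rpar G r0 v) + 1 = rdist G r0 v"
    unfolding rpar_def by (rule someI_ex)
  then show "{rpar G r0 v, v} \<in> G" "rdist G r0 (rpar G r0 v) + 1 = rdist G r0 v" by auto
qed

lemma rpar_inj:
  assumes "connected_on V G" "r0 \<in> V"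
  shows "inj_on (\<lambda>v. {rpar G r0 v, v}) (V - {r0})"
proof (rule inj_onI)
  fix v w assume v: "v \<in> V - {r0}" and w: "w \<in> V - {r0}" and eq: "{rpar G r0 v, v} = {rpar G r0 w, w}"
  have cv: "(r0, v) \<in> (adj G)\<^sup>*" "(r0, w) \<in> (adj G)\<^sup>*" using assms v w unfolding connected_on_def by auto
  have dv: "rdist G r0 (rpar G r0 v) + 1 = rdist G r0 v" using rpar(2)[OF cv(1)] v by auto
  have dw: "rdist G r0 (rpar G r0 w) + 1 = rdist G r0 w" using rpar(2)[OF cv(2)] w by auto
  show "v = w"
  proof (rule ccontr)
    assume "v \<noteq> w"
    then have h: "v = rpar G r0 w \<and> w = rpar G r0 v" using eq by (auto simp: doubleton_eq_iff)
    then have "rdist G r0 w + 1 = rdist G r0 v" using dv by metis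
    moreover have "rdist G r0 v + 1 = rdist G r0 w" using dw h by metis
    ultimately show False by simp
  qed
qed

lemma conn_card:
  assumes "graph_on V G" "connected_on V G" "finite V" "r0 \<in> V"
  shows "card V - 1 \<le> card G"
proof -
  have "(\<lambda>v. {rpar G r0 v, v}) ` (V - {r0}) \<subseteq> G"
  proof
    fix e assume "e \<in> (\<lambda>v. {rpar G r0 v, v}) ` (V - {r0})"
    then obtain v where v: "v \<in> V - {r0}" "e = {rpar G r0 v, v}" by auto
    have "(r0, v) \<in> (adj G)\<^sup>*" using assms v unfolding connected_on_def by auto
    then show "e \<in> G" using rpar(1) v by auto
  qed
  then have "card (V - {r0}) \<le> card G"
    using card_inj_on_le[OF rpar_inj[OF assms(2,4)]] graph_on_finite[OF assms(1,3)] by blast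
  then show ?thesis using assms(3,4) by simp
qed

lemma tree_edge_disconn:
  assumes t: "is_tree V F" and f: "f \<in> F" "f = {a, b}"
  shows "(a, b) \<notin> (adj (F - {f}))\<^sup>*"
proof
  assume ab: "(a, b) \<in> (adj (F - {f}))\<^sup>*"
  have g: "graph_on V F" "connected_on V F" "finite V" "card F = card V - 1"
    using t unfolding is_tree_def by auto
  obtain a' b' where ab': "a' \<in> V" "b' \<in> V" "a' \<noteq> b'" "f = {a', b'}" using g(1) f unfolding graph_on_def by blast
  have aV: "a \<in> V" "b \<in> V" "a \<noteq> b" using ab' f by (auto simp: doubleton_eq_iff)
  have g2: "graph_on V (F - {f})" using g(1) unfolding graph_on_def by auto
  have c2: "connected_on V (F - {f})"
    unfolding connected_on_def
  proof (intro ballI)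
    fix u w assume u: "u \<in> V" and w: "w \<in> V"
    have "(a, u) \<in> (adj F)\<^sup>*" "(a, w) \<in> (adj F)\<^sup>*" using g(2) u w aV unfolding connected_on_def by auto
    then have au: "(a, u) \<in> (adj (F - {f}))\<^sup>*" and aw: "(a, w) \<in> (adj (F - {f}))\<^sup>*"
      using remove_edge_or[OF _ f(2)] ab rtrancl_trans by metis+
    show "(u, w) \<in> (adj (F - {f}))\<^sup>*" using rtr_sym[OF au] aw by (rule rtrancl_trans)
  qed
  have "card V - 1 \<le> card (F - {f})" using conn_card[OF g2 c2 g(3) aV(1)] .
  moreover have "card (F - {f}) = card F - 1" using f graph_on_finite[OF g(1,3)] by simp
  moreover have "card V \<ge> 2"
  proof -
    have "{a, b} \<subseteq> V" using aV by auto
    then have "card {a, b} \<le> card V" using g(3) card_mono by blast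
    then show ?thesis using aV by simp
  qed
  ultimately show False using g(4) by linarith
qed


locale rtree =
  fixes V :: "'v set" and E :: "'v set set" and rt :: 'v
  assumes tree: "is_tree V E" and rtV: "rt \<in> V"
begin

definition dst :: "'v \<Rightarrow> nat" where "dst v = rdist E rt v"
definition pa :: "'v \<Rightarrow> 'v" where "pa v = (if v = rt then rt else rpar E rt v)"
definition ed :: "'v \<Rightarrow> 'v set" where "ed v = {pa v, v}"
definition anc :: "'v \<Rightarrow> 'v \<Rightarrow> bool" where "anc u v \<longleftrightarrow> (\<exists>k. (pa ^^ k) v = u)"

lemma finV: "finite V" and graphE: "graph_on V E" and connE: "connected_on V E"
  and cardE: "card E = card V - 1"
  using tree unfolding is_tree_def by auto

lemma finE: "finite E" using graph_on_finite[OF graphE finV] .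

lemma reach: "v \<in> V \<Longrightarrow> (rt, v) \<in> (adj E)\<^sup>*"
  using connE rtV unfolding connected_on_def by auto

lemma edge_V: "{a, b} \<in> E \<Longrightarrow> a \<in> V \<and> b \<in> V \<and> a \<noteq> b"
  using graphE unfolding graph_on_def by (auto simp: doubleton_eq_iff)

lemma pa_rt[simp]: "pa rt = rt" by (simp add: pa_def)

lemma ed_E: "v \<in> V - {rt} \<Longrightarrow> ed v \<in> E"
  unfolding ed_def pa_def using rpar(1)[OF reach] by auto

lemma dst_pa: "v \<in> V - {rt} \<Longrightarrow> dst (pa v) + 1 = dst v"
  unfolding dst_def pa_def using rpar(2)[OF reach] by auto

lemma pa_V: "v \<in> V \<Longrightarrow> pa v \<in> V"
  using ed_E edge_V unfolding ed_def by (cases "v = rt") auto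

lemma dst0: "v \<in> V \<Longrightarrow> dst v = 0 \<longleftrightarrow> v = rt"
  unfolding dst_def using rdist_0[OF reach] by simp

lemma dst_pa': "v \<in> V \<Longrightarrow> dst (pa v) = dst v - 1"
  using dst_pa dst0 by (cases "v = rt") force+

lemma pa_ne: "v \<in> V - {rt} \<Longrightarrow> pa v \<noteq> v"
  using dst_pa by force

lemma ed_inj: "inj_on ed (V - {rt})"
proof -
  have "inj_on (\<lambda>v. {rpar E rt v, v}) (V - {rt})" using rpar_inj[OF connE rtV] .
  moreover have "\<And>v. v \<in> V - {rt} \<Longrightarrow> ed v = {rpar E rt v, v}" unfolding ed_def pa_def by auto
  ultimately show ?thesis by (simp add: inj_on_def)
qed

lemma ed_img: "ed ` (V - {rt}) = E"
proof -
  have sub: "ed ` (V - {rt}) \<subseteq> E" using ed_E by auto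
  have "card (ed ` (V - {rt})) = card (V - {rt})" using card_image[OF ed_inj] .
  also have "\<dots> = card E" using cardE finV rtV by simp
  finally show ?thesis using card_subset_eq[OF finE sub] by simp
qed

lemma edge_ed: "e \<in> E \<Longrightarrow> \<exists>w \<in> V - {rt}. e = ed w"
  using ed_img by auto

lemma pw_V: "v \<in> V \<Longrightarrow> (pa ^^ k) v \<in> V"
  by (induction k) (auto simp: pa_V)

lemma dst_pw: "v \<in> V \<Longrightarrow> dst ((pa ^^ k) v) = dst v - k"
proof (induction k)
  case 0 then show ?case by simp
next
  case (Suc k)
  then show ?case using dst_pa'[OF pw_V[OF Suc(2), of k]] by simp
qed

lemma pw_rt: "(pa ^^ k) rt = rt"
  by (induction k) auto

lemma anc_refl: "anc v v" unfolding anc_def by (metis funpow_0)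

lemma anc_V: "anc u v \<Longrightarrow> v \<in> V \<Longrightarrow> u \<in> V"
  unfolding anc_def using pw_V by blast

lemma anc_dst: "anc u v \<Longrightarrow> v \<in> V \<Longrightarrow> dst u \<le> dst v"
  unfolding anc_def using dst_pw by auto

lemma anc_eq: "anc u v \<Longrightarrow> v \<in> V \<Longrightarrow> dst u = dst v \<Longrightarrow> u = v"
proof -
  assume a: "anc u v" "v \<in> V" "dst u = dst v"
  then obtain k where k: "(pa ^^ k) v = u" unfolding anc_def by blast
  show "u = v"
  proof (cases "k = 0")
    case True then show ?thesis using k by simp
  next
    case False
    then have "dst v = 0" using dst_pw[OF a(2), of k] k a(3) by simp
    then have "v = rt" using dst0 a(2) by simp
    then show ?thesis using k pw_rt by simp
  qed
qed

lemma anc_antisym: "anc u v \<Longrightarrow> anc v u \<Longrightarrow> v \<in> V \<Longrightarrow> u = v"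
  using anc_eq anc_dst anc_V by (meson le_antisym)

lemma anc_trans: "anc u v \<Longrightarrow> anc v w \<Longrightarrow> anc u w"
  unfolding anc_def by (metis funpow_add o_apply)

lemma anc_rt: "v \<in> V \<Longrightarrow> anc rt v"
proof -
  assume v: "v \<in> V"
  have "dst ((pa ^^ dst v) v) = 0" using dst_pw[OF v] by simp
  then have "(pa ^^ dst v) v = rt" using dst0 pw_V[OF v] by blast
  then show ?thesis unfolding anc_def by blast
qed

lemma anc_of_rt: "anc w rt \<Longrightarrow> w = rt"
  unfolding anc_def using pw_rt by auto

lemma anc_pa: "anc (pa v) v"
  unfolding anc_def by (metis funpow_0 funpow_Suc_right o_apply)

lemma anc_step: "v \<in> V - {rt} \<Longrightarrow> anc w v \<longleftrightarrow> w = v \<or> anc w (pa v)"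
proof
  assume v: "v \<in> V - {rt}" and "anc w v"
  then obtain k where k: "(pa ^^ k) v = w" unfolding anc_def by blast
  show "w = v \<or> anc w (pa v)"
  proof (cases k)
    case 0 then show ?thesis using k by simp
  next
    case (Suc j)
    then have "(pa ^^ j) (pa v) = w" using k by (metis funpow_Suc_right o_apply)
    then show ?thesis unfolding anc_def by blast
  qed
next
  assume "w = v \<or> anc w (pa v)"
  then show "anc w v" using anc_refl anc_pa anc_trans by blast
qed

lemma anc_comp: "anc u d \<Longrightarrow> anc u' d \<Longrightarrow> anc u u' \<or> anc u' u"
proof -
  assume "anc u d" "anc u' d"
  then obtain k k' where k: "(pa ^^ k) d = u" and k': "(pa ^^ k') d = u'" unfolding anc_def by blast
  show ?thesis
  proof (cases "k \<le> k'")
    case True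
    then have "(pa ^^ (k' - k)) u = u'" using k k' by (metis funpow_add le_add_diff_inverse2 o_apply)
    then show ?thesis unfolding anc_def by blast
  next
    case False
    then have "(pa ^^ (k - k')) u' = u" using k k' by (metis funpow_add le_add_diff_inverse2 nat_le_linear o_apply)
    then show ?thesis unfolding anc_def by blast
  qed
qed

lemma anc_child: "anc a b \<Longrightarrow> a \<noteq> b \<Longrightarrow> a \<noteq> rt \<Longrightarrow> b \<in> V \<Longrightarrow> \<exists>c. c \<in> V - {rt} \<and> pa c = a \<and> anc c b"
proof -
  assume a: "anc a b" "a \<noteq> b" "a \<noteq> rt" "b \<in> V"
  then obtain k where k: "(pa ^^ k) b = a" unfolding anc_def by blast
  then obtain j where j: "k = Suc j" using a(2) by (cases k) auto
  let ?c = "(pa ^^ j) b"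
  have "pa ?c = a" using k j by simp
  moreover have "?c \<noteq> rt" using \<open>pa ?c = a\<close> a(3) by auto
  moreover have "?c \<in> V" using pw_V a(4) by blast
  moreover have "anc ?c b" unfolding anc_def by blast
  ultimately show ?thesis by blast
qed

lemma not_anc_pa: "v \<in> V - {rt} \<Longrightarrow> \<not> anc v (pa v)"
  using anc_dst dst_pa pa_V by fastforce

lemma ed_mem: "w \<in> V - {rt} \<Longrightarrow> a \<in> ed w \<longleftrightarrow> a = w \<or> a = pa w"
  unfolding ed_def by auto

end

context rtree begin

definition Ch :: "'v \<Rightarrow> 'v set" where "Ch a = {c \<in> V - {rt}. pa c = a}"

definition Gm :: "('v set \<Rightarrow> real) \<Rightarrow> 'v \<Rightarrow> 'v \<Rightarrow> real" where
  "Gm \<rho> a b = (\<Sum>w \<in> {w \<in> V - {rt}. anc w a \<and> anc w b}. \<rho> (ed w))"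

lemma finCh: "finite (Ch a)" unfolding Ch_def using finV by auto

lemma Gm_rt: "Gm \<rho> rt b = 0"
proof -
  have e: "{w \<in> V - {rt}. anc w rt \<and> anc w b} = {}" using anc_of_rt by auto
  show ?thesis unfolding Gm_def e by simp
qed

lemma Gm_sym: "Gm \<rho> a b = Gm \<rho> b a"
  unfolding Gm_def by (simp add: conj_commute)

lemma Gm_pa:
  assumes a: "a \<in> V - {rt}"
  shows "Gm \<rho> a b = Gm \<rho> (pa a) b + (if anc a b then \<rho> (ed a) else 0)"
proof -
  let ?S = "{w \<in> V - {rt}. anc w (pa a) \<and> anc w b}"
  have fin: "finite ?S" using finV by auto
  have notin: "a \<notin> ?S" using not_anc_pa[OF a] by auto
  have eq: "{w \<in> V - {rt}. anc w a \<and> anc w b} = (if anc a b then insert a ?S else ?S)"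
    using anc_step[OF a] a by auto
  show ?thesis unfolding Gm_def eq using fin notin by auto
qed

lemma nbr:
  assumes a: "a \<in> V - {rt}" and c: "c \<noteq> a"
  shows "{a, c} \<in> E \<longleftrightarrow> c = pa a \<or> c \<in> Ch a"
proof
  assume "{a, c} \<in> E"
  then obtain w where w: "w \<in> V - {rt}" "{a, c} = ed w" using edge_ed by blast
  then have "(a = w \<and> c = pa w) \<or> (a = pa w \<and> c = w)" using c unfolding ed_def by (auto simp: doubleton_eq_iff)
  then show "c = pa a \<or> c \<in> Ch a" using w unfolding Ch_def by auto
next
  assume "c = pa a \<or> c \<in> Ch a"
  then show "{a, c} \<in> E"
  proof
    assume "c = pa a" then show ?thesis using ed_E[OF a] unfolding ed_def by (simp add: insert_commute)
  next
    assume "c \<in> Ch a" then show ?thesis using ed_E[of c] unfolding ed_def Ch_def by auto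
  qed
qed

lemma pa_notin_Ch: "a \<in> V - {rt} \<Longrightarrow> pa a \<notin> Ch a"
proof
  assume a: "a \<in> V - {rt}" and "pa a \<in> Ch a"
  then have p: "pa a \<in> V - {rt}" "pa (pa a) = a" unfolding Ch_def by auto
  have "dst (pa (pa a)) + 1 = dst (pa a)" using dst_pa[OF p(1)] .
  moreover have "dst (pa a) + 1 = dst a" using dst_pa[OF a] .
  ultimately show False using p(2) by simp
qed

lemma a_notin_Ch: "a \<in> V - {rt} \<Longrightarrow> a \<notin> Ch a"
  unfolding Ch_def using pa_ne by force

lemma edges_at:
  assumes a: "a \<in> V - {rt}"
  shows "{e \<in> E. a \<in> e} = ed ` (insert a (Ch a))"
proof
  show "{e \<in> E. a \<in> e} \<subseteq> ed ` insert a (Ch a)"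
  proof
    fix e assume "e \<in> {e \<in> E. a \<in> e}"
    then obtain w where w: "w \<in> V - {rt}" "e = ed w" "a \<in> e" using edge_ed by blast
    then have "a = w \<or> a = pa w" using ed_mem by blast
    then show "e \<in> ed ` insert a (Ch a)" using w unfolding Ch_def by auto
  qed
next
  show "ed ` insert a (Ch a) \<subseteq> {e \<in> E. a \<in> e}"
    using ed_E a unfolding Ch_def ed_def by auto
qed

lemma diag_sum:
  assumes a: "a \<in> V - {rt}"
  shows "(\<Sum>e\<in>{e \<in> E. a \<in> e}. f e) = f (ed a) + (\<Sum>c\<in>Ch a. f (ed c))"
proof -
  have inj: "inj_on ed (insert a (Ch a))"
    by (rule inj_on_subset[OF ed_inj]) (use a in \<open>auto simp: Ch_def\<close>)
  have "(\<Sum>e\<in>{e \<in> E. a \<in> e}. f e) = (\<Sum>c\<in>insert a (Ch a). f (ed c))"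
    unfolding edges_at[OF a] using sum.reindex[OF inj] by simp
  also have "\<dots> = f (ed a) + (\<Sum>c\<in>Ch a. f (ed c))"
    using finCh a_notin_Ch[OF a] by simp
  finally show ?thesis .
qed

lemma count_children:
  assumes a: "a \<in> V - {rt}" and b: "b \<in> V"
  shows "(if anc a b then 1 else 0) - (\<Sum>c\<in>Ch a. (if anc c b then 1 else 0)) = (if a = b then 1 else (0::real))"
proof -
  have s: "(\<Sum>c\<in>Ch a. (if anc c b then 1 else (0::real))) = real (card {c \<in> Ch a. anc c b})"
  proof -
    have "Ch a \<inter> {c. anc c b} = {c \<in> Ch a. anc c b}" by auto
    then show ?thesis using finCh by (simp add: sum.If_cases)
  qed
  show ?thesis
  proof (cases "a = b")
    case True
    have "{c \<in> Ch a. anc c b} = {}"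
    proof -
      have "\<not> anc c a" if "c \<in> Ch a" for c
      proof
        assume "anc c a"
        then have "dst c \<le> dst a" using anc_dst a by auto
        moreover have "dst a + 1 = dst c" using dst_pa that unfolding Ch_def by force
        ultimately show False by simp
      qed
      then show ?thesis using True by auto
    qed
    then show ?thesis using s True anc_refl by simp
  next
    case False
    show ?thesis
    proof (cases "anc a b")
      case True
      obtain c where c: "c \<in> V - {rt}" "pa c = a" "anc c b" using anc_child[OF True False _ b] a by blast
      have "{c \<in> Ch a. anc c b} = {c}"
      proof (rule set_eqI, rule iffI)
        fix c' assume "c' \<in> {c \<in> Ch a. anc c b}"
        then have c': "c' \<in> V - {rt}" "pa c' = a" "anc c' b" unfolding Ch_def by auto
        have d: "dst c = dst c'" using dst_pa[OF c(1)] dst_pa[OF c'(1)] c(2) c'(2) by simp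
        from anc_comp[OF c(3) c'(3)] show "c' \<in> {c}"
          using anc_eq d c(1) c'(1) by auto
      next
        fix c' assume "c' \<in> {c}" then show "c' \<in> {c \<in> Ch a. anc c b}" using c unfolding Ch_def by auto
      qed
      then show ?thesis using s True False by simp
    next
      case na: False
      have "{c \<in> Ch a. anc c b} = {}"
        using na anc_pa anc_trans unfolding Ch_def by blast
      then show ?thesis using s na False by simp
    qed
  qed
qed

lemma lap_Gm:
  assumes a: "a \<in> V - {rt}" and b: "b \<in> V - {rt}" and pos: "\<forall>e\<in>E. \<rho> e > 0"
  shows "(\<Sum>c\<in>V - {rt}. red_laplacian V rt E \<rho> a c * Gm \<rho> c b) = (if a = b then 1 else 0)"
proof -
  let ?H = "red_laplacian V rt E \<rho>"
  let ?D = "\<Sum>e\<in>{e \<in> E. a \<in> e}. 1 / \<rho> e"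
  let ?f = "\<lambda>c. if {a, c} \<in> E then - (1 / \<rho> {a, c}) * Gm \<rho> c b else 0"
  have fin: "finite (V - {rt})" using finV by auto
  have "(\<Sum>c\<in>V - {rt}. ?H a c * Gm \<rho> c b) = ?H a a * Gm \<rho> a b + (\<Sum>c\<in>V - {rt} - {a}. ?H a c * Gm \<rho> c b)"
    using sum.remove[OF fin a] by simp
  also have "(\<Sum>c\<in>V - {rt} - {a}. ?H a c * Gm \<rho> c b) = (\<Sum>c\<in>V - {rt} - {a}. ?f c)"
    by (rule sum.cong) (use a in \<open>auto simp: red_laplacian_def\<close>)
  also have "\<dots> = (\<Sum>c\<in>V - {a}. ?f c)"
  proof (rule sum.mono_neutral_left)
    show "finite (V - {a})" using finV by auto
    show "\<forall>i\<in>V - {a} - (V - {rt} - {a}). ?f i = 0" using Gm_rt by auto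
  qed auto
  also have "\<dots> = (\<Sum>c\<in>insert (pa a) (Ch a). ?f c)"
  proof (rule sum.mono_neutral_right)
    show "finite (V - {a})" using finV by auto
    show "insert (pa a) (Ch a) \<subseteq> V - {a}" using pa_V a pa_ne[OF a] a_notin_Ch[OF a] unfolding Ch_def by auto
    show "\<forall>i\<in>V - {a} - insert (pa a) (Ch a). ?f i = 0" using nbr[OF a] by auto
  qed
  also have "\<dots> = ?f (pa a) + (\<Sum>c\<in>Ch a. ?f c)"
    using finCh pa_notin_Ch[OF a] by simp
  also have "?f (pa a) = - (1 / \<rho> (ed a)) * Gm \<rho> (pa a) b"
    using nbr[OF a, of "pa a"] pa_ne[OF a] unfolding ed_def by (auto simp: insert_commute)
  also have "(\<Sum>c\<in>Ch a. ?f c) = (\<Sum>c\<in>Ch a. - (1 / \<rho> (ed c)) * Gm \<rho> c b)"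
  proof (rule sum.cong)
    fix c assume c: "c \<in> Ch a"
    then have "{a, c} \<in> E" using nbr[OF a, of c] a_notin_Ch[OF a] by auto
    moreover have "{a, c} = ed c" using c unfolding Ch_def ed_def by auto
    ultimately show "?f c = - (1 / \<rho> (ed c)) * Gm \<rho> c b" by simp
  qed simp
  also have "?H a a = 1 / \<rho> (ed a) + (\<Sum>c\<in>Ch a. 1 / \<rho> (ed c))"
    using diag_sum[OF a] a unfolding red_laplacian_def by simp
  finally have eq: "(\<Sum>c\<in>V - {rt}. ?H a c * Gm \<rho> c b) =
     (1 / \<rho> (ed a) + (\<Sum>c\<in>Ch a. 1 / \<rho> (ed c))) * Gm \<rho> a b +
     (- (1 / \<rho> (ed a)) * Gm \<rho> (pa a) b + (\<Sum>c\<in>Ch a. - (1 / \<rho> (ed c)) * Gm \<rho> c b))" .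
  have pa_a: "\<rho> (ed a) > 0" using pos ed_E[OF a] by auto
  have t1: "(1 / \<rho> (ed a)) * Gm \<rho> a b - (1 / \<rho> (ed a)) * Gm \<rho> (pa a) b = (if anc a b then 1 else 0)"
    using Gm_pa[OF a, of \<rho> b] pa_a by (simp add: field_simps)
  have t2: "(1 / \<rho> (ed c)) * Gm \<rho> a b - (1 / \<rho> (ed c)) * Gm \<rho> c b = - (if anc c b then 1 else 0)"
    if c: "c \<in> Ch a" for c
  proof -
    have cV: "c \<in> V - {rt}" "pa c = a" using c unfolding Ch_def by auto
    have "\<rho> (ed c) > 0" using pos ed_E[OF cV(1)] by auto
    then show ?thesis using Gm_pa[OF cV(1), of \<rho> b] cV(2) by (simp add: field_simps)
  qed
  have "(\<Sum>c\<in>V - {rt}. ?H a c * Gm \<rho> c b) =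
      ((1 / \<rho> (ed a)) * Gm \<rho> a b - (1 / \<rho> (ed a)) * Gm \<rho> (pa a) b)
      + (\<Sum>c\<in>Ch a. (1 / \<rho> (ed c)) * Gm \<rho> a b - (1 / \<rho> (ed c)) * Gm \<rho> c b)"
    unfolding eq by (simp add: algebra_simps sum.distrib sum_distrib_right sum_distrib_left sum_subtractf sum_negf)
  also have "\<dots> = (if anc a b then 1 else 0) - (\<Sum>c\<in>Ch a. (if anc c b then 1 else 0))"
    using t1 t2 by (simp add: sum_negf)
  also have "\<dots> = (if a = b then 1 else 0)" using count_children[OF a] b by simp
  finally show ?thesis .
qed

definition Ginv :: "('v set \<Rightarrow> real) \<Rightarrow> 'v \<Rightarrow> 'v \<Rightarrow> real" where
  "Ginv \<rho> a b = (if a \<in> V - {rt} \<and> b \<in> V - {rt} then Gm \<rho> a b else 0)"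

lemma lap_sym: "red_laplacian V rt E \<rho> a b = red_laplacian V rt E \<rho> b a"
  unfolding red_laplacian_def by (auto simp: insert_commute)

lemma inv_on_eq:
  assumes pos: "\<forall>e\<in>E. \<rho> e > 0"
  shows "inv_on (V - {rt}) (red_laplacian V rt E \<rho>) = Ginv \<rho>"
proof -
  let ?V0 = "V - {rt}"
  let ?H = "red_laplacian V rt E \<rho>"
  let ?P = "\<lambda>G. (\<forall>a\<in>?V0. \<forall>b\<in>?V0. (\<Sum>c\<in>?V0. ?H a c * G c b) = (if a = b then 1 else 0))
                      \<and> (\<forall>a b. a \<notin> ?V0 \<or> b \<notin> ?V0 \<longrightarrow> G a b = 0)"
  have fin: "finite ?V0" using finV by auto
  have right: "(\<Sum>c\<in>?V0. ?H a c * Ginv \<rho> c b) = (if a = b then 1 else 0)" if "a \<in> ?V0" "b \<in> ?V0" for a b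
  proof -
    have "(\<Sum>c\<in>?V0. ?H a c * Ginv \<rho> c b) = (\<Sum>c\<in>?V0. ?H a c * Gm \<rho> c b)"
      by (rule sum.cong) (use that in \<open>auto simp: Ginv_def\<close>)
    then show ?thesis using lap_Gm[OF that pos] by simp
  qed
  have left: "(\<Sum>c\<in>?V0. Ginv \<rho> a c * ?H c b) = (if a = b then 1 else 0)" if "a \<in> ?V0" "b \<in> ?V0" for a b
  proof -
    have "(\<Sum>c\<in>?V0. Ginv \<rho> a c * ?H c b) = (\<Sum>c\<in>?V0. ?H b c * Ginv \<rho> c a)"
      by (rule sum.cong) (auto simp: Ginv_def Gm_sym lap_sym)
    then show ?thesis using right[OF that(2,1)] by auto
  qed
  have PG: "?P (Ginv \<rho>)" using right by (auto simp: Ginv_def)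
  have uniq: "G = Ginv \<rho>" if PG': "?P G" for G
  proof (rule ext, rule ext)
    fix a b
    show "G a b = Ginv \<rho> a b"
    proof (cases "a \<in> ?V0 \<and> b \<in> ?V0")
      case False then show ?thesis using PG' by (auto simp: Ginv_def)
    next
      case True
      have "(\<Sum>c\<in>?V0. (if a = c then 1 else 0) * G c b) = (\<Sum>c\<in>?V0. if a = c then G c b else 0)"
        by (rule sum.cong) auto
      then have "G a b = (\<Sum>c\<in>?V0. (if a = c then 1 else 0) * G c b)"
        using True fin by simp
      also have "\<dots> = (\<Sum>c\<in>?V0. (\<Sum>d\<in>?V0. Ginv \<rho> a d * ?H d c) * G c b)"
        using left True by simp
      also have "\<dots> = (\<Sum>d\<in>?V0. Ginv \<rho> a d * (\<Sum>c\<in>?V0. ?H d c * G c b))"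
        by (simp add: sum_distrib_left sum_distrib_right mult.assoc) (rule sum.swap)
      also have "\<dots> = (\<Sum>d\<in>?V0. Ginv \<rho> a d * (if d = b then 1 else 0))"
        using PG' True by simp
      also have "\<dots> = (\<Sum>d\<in>?V0. if d = b then Ginv \<rho> a d else 0)"
        by (rule sum.cong) auto
      also have "\<dots> = Ginv \<rho> a b" using True fin by simp
      finally show ?thesis .
    qed
  qed
  show ?thesis unfolding inv_on_def using PG uniq by (rule the_equality)
qed

end

context rtree begin

definition Rp :: "('v set \<Rightarrow> real) \<Rightarrow> 'v \<Rightarrow> 'v \<Rightarrow> 'v \<Rightarrow> real" where
  "Rp \<rho> a c d = (\<Sum>w \<in> {w \<in> V - {rt}. anc w d \<and> anc w a \<noteq> anc w c}. \<rho> (ed w))"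

lemma sign_cases:
  "(\<forall>w \<in> V - {rt}. anc w d \<longrightarrow> anc w c \<longrightarrow> anc w a) \<or> (\<forall>w \<in> V - {rt}. anc w d \<longrightarrow> anc w a \<longrightarrow> anc w c)"
proof (rule ccontr)
  assume "\<not> ?thesis"
  then obtain w1 w2 where w1: "anc w1 d" "anc w1 c" "\<not> anc w1 a" and w2: "anc w2 d" "anc w2 a" "\<not> anc w2 c"
    by blast
  from anc_comp[OF w1(1) w2(1)] show False using w1 w2 anc_trans by blast
qed

lemma Gm_split: "Gm \<rho> a d = (\<Sum>w \<in> {w \<in> V - {rt}. anc w d}. if anc w a then \<rho> (ed w) else 0)"
proof -
  have fin: "finite {w \<in> V - {rt}. anc w d}" using finV by auto
  have "{w \<in> V - {rt}. anc w a \<and> anc w d} = {w \<in> {w \<in> V - {rt}. anc w d}. anc w a}" by auto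
  then show ?thesis unfolding Gm_def using sum.inter_filter[OF fin, of "\<lambda>w. \<rho> (ed w)" "\<lambda>w. anc w a"] by simp
qed

lemma Rp_split: "Rp \<rho> a c d = (\<Sum>w \<in> {w \<in> V - {rt}. anc w d}. if anc w a \<noteq> anc w c then \<rho> (ed w) else 0)"
proof -
  have fin: "finite {w \<in> V - {rt}. anc w d}" using finV by auto
  have "{w \<in> V - {rt}. anc w d \<and> anc w a \<noteq> anc w c} = {w \<in> {w \<in> V - {rt}. anc w d}. anc w a \<noteq> anc w c}" by auto
  then show ?thesis unfolding Rp_def using sum.inter_filter[OF fin, of "\<lambda>w. \<rho> (ed w)" "\<lambda>w. anc w a \<noteq> anc w c"] by simp
qed

lemma Gm_diff_sign:
  "\<exists>s::real. (s = 1 \<or> s = -1) \<and> (\<forall>\<rho>. Gm \<rho> a d - Gm \<rho> c d = s * Rp \<rho> a c d)"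
proof -
  let ?T = "{w \<in> V - {rt}. anc w d}"
  have diff: "Gm \<rho> a d - Gm \<rho> c d = (\<Sum>w \<in> ?T. (if anc w a then \<rho> (ed w) else 0) - (if anc w c then \<rho> (ed w) else 0))" for \<rho>
    unfolding Gm_split by (simp add: sum_subtractf)
  from sign_cases[of d c a] show ?thesis
  proof
    assume h: "\<forall>w \<in> V - {rt}. anc w d \<longrightarrow> anc w c \<longrightarrow> anc w a"
    have "Gm \<rho> a d - Gm \<rho> c d = 1 * Rp \<rho> a c d" for \<rho>
      unfolding diff Rp_split by (simp, rule sum.cong) (use h in auto)
    then show ?thesis by blast
  next
    assume h: "\<forall>w \<in> V - {rt}. anc w d \<longrightarrow> anc w a \<longrightarrow> anc w c"
    have "Gm \<rho> a d - Gm \<rho> c d = (-1) * Rp \<rho> a c d" for \<rho>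
      unfolding diff Rp_split by (simp add: sum_negf[symmetric], rule sum.cong) (use h in auto)
    then show ?thesis by blast
  qed
qed

lemma Rp_nonneg: "\<forall>e\<in>E. \<rho> e > 0 \<Longrightarrow> Rp \<rho> a c d \<ge> 0"
  unfolding Rp_def using ed_E by (intro sum_nonneg) (auto intro: less_imp_le)

lemma Rp_pa:
  assumes u: "u \<in> V - {rt}"
  shows "Rp \<rho> (pa u) u d = (if anc u d then \<rho> (ed u) else 0)"
proof -
  have "{w \<in> V - {rt}. anc w d \<and> anc w (pa u) \<noteq> anc w u} = (if anc u d then {u} else {})"
    using anc_step[OF u] not_anc_pa[OF u] u by auto
  then show ?thesis unfolding Rp_def by simp
qed

lemma Rp_mono:
  assumes pos: "\<forall>e\<in>E. \<rho> e > 0" and sub: "W \<subseteq> {w \<in> V - {rt}. anc w d \<and> anc w a \<noteq> anc w c}"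
  shows "(\<Sum>w\<in>W. \<rho> (ed w)) \<le> Rp \<rho> a c d"
  unfolding Rp_def
  by (rule sum_mono2) (use finV sub pos ed_E in \<open>auto intro: less_imp_le\<close>)

lemma cut_path:
  "u \<in> V \<Longrightarrow> v \<in> V \<Longrightarrow> (u \<in> S) \<noteq> (v \<in> S) \<Longrightarrow>
    \<exists>w \<in> V - {rt}. (w \<in> S) \<noteq> (pa w \<in> S) \<and> anc w u \<noteq> anc w v"
proof (induction "dst u + dst v" arbitrary: u v rule: less_induct)
  case less
  have key: "\<exists>w \<in> V - {rt}. (w \<in> S) \<noteq> (pa w \<in> S) \<and> anc w u \<noteq> anc w v"
    if uv: "u \<in> V" "v \<in> V" "(u \<in> S) \<noteq> (v \<in> S)" "dst v \<le> dst u"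
      and IH: "\<And>u'. u' \<in> V \<Longrightarrow> dst u' + dst v < dst u + dst v \<Longrightarrow> (u' \<in> S) \<noteq> (v \<in> S) \<Longrightarrow>
         \<exists>w \<in> V - {rt}. (w \<in> S) \<noteq> (pa w \<in> S) \<and> anc w u' \<noteq> anc w v" for u v
  proof -
    have neq: "u \<noteq> v" using uv(3) by auto
    have nuv: "\<not> anc u v"
    proof
      assume "anc u v"
      then have "dst u \<le> dst v" using anc_dst uv by auto
      then have "u = v" using anc_eq \<open>anc u v\<close> uv by auto
      then show False using neq by simp
    qed
    have urt: "u \<noteq> rt"
    proof
      assume "u = rt"
      then have "dst v = 0" using uv dst0 by (metis le_zero_eq)
      then have "v = rt" using dst0 uv by auto
      then show False using neq \<open>u = rt\<close> by simp
    qed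
    then have u0: "u \<in> V - {rt}" using uv by auto
    show ?thesis
    proof (cases "(u \<in> S) = (pa u \<in> S)")
      case False
      then show ?thesis using u0 nuv anc_refl by blast
    next
      case True
      have "dst (pa u) + dst v < dst u + dst v" using dst_pa[OF u0] by simp
      then obtain w where w: "w \<in> V - {rt}" "(w \<in> S) \<noteq> (pa w \<in> S)" "anc w (pa u) \<noteq> anc w v"
        using IH[OF pa_V[OF uv(1)]] True uv(3) by blast
      have "w \<noteq> u" using w(3) not_anc_pa[OF u0] nuv by auto
      then have "anc w u = anc w (pa u)" using anc_step[OF u0] by auto
      then show ?thesis using w by auto
    qed
  qed
  show ?case
  proof (cases "dst v \<le> dst u")
    case True
    show ?thesis
      by (rule key[OF less.prems True]) (use less.hyps less.prems in auto)
  next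
    case False
    have "\<exists>w \<in> V - {rt}. (w \<in> S) \<noteq> (pa w \<in> S) \<and> anc w v \<noteq> anc w u"
    proof (rule key[of v u])
      show "v \<in> V" "u \<in> V" "(v \<in> S) \<noteq> (u \<in> S)" "dst u \<le> dst v" using less.prems False by auto
    next
      fix u' assume "u' \<in> V" "dst u' + dst u < dst v + dst u" "(u' \<in> S) \<noteq> (u \<in> S)"
      then have "\<exists>w \<in> V - {rt}. (w \<in> S) \<noteq> (pa w \<in> S) \<and> anc w u \<noteq> anc w u'"
        using less.hyps[of u u'] less.prems by (auto simp: add.commute)
      then show "\<exists>w \<in> V - {rt}. (w \<in> S) \<noteq> (pa w \<in> S) \<and> anc w u' \<noteq> anc w u" by metis
    qed
    then show ?thesis by metis
  qed
qed

lemma second_elem_aux: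
  assumes a: "a \<in> V" and c: "c \<in> V" and ne: "{a, c} \<notin> E"
    and u: "u \<in> V - {rt}" "anc u a" "\<not> anc u c"
  shows "\<exists>u' \<in> V - {rt}. u' \<noteq> u \<and> anc u' a \<noteq> anc u' c"
proof (rule ccontr)
  assume "\<not> ?thesis"
  then have only: "\<And>w. w \<in> V - {rt} \<Longrightarrow> w \<noteq> u \<Longrightarrow> anc w a = anc w c" by blast
  have art: "a \<noteq> rt" using u anc_of_rt by auto
  have au: "a = u"
  proof (rule ccontr)
    assume "a \<noteq> u"
    then have "anc a c" using only[of a] a art anc_refl by auto
    then show False using u anc_trans by blast
  qed
  have "c = pa u"
  proof (cases "c = rt")
    case True
    show ?thesis
    proof (rule ccontr)
      assume "c \<noteq> pa u"
      then have "pa u \<in> V - {rt}" using True pa_V u by auto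
      moreover have "pa u \<noteq> u" using pa_ne u by auto
      ultimately have "anc (pa u) a = anc (pa u) c" using only by blast
      then have "anc (pa u) rt" using anc_pa au True by simp
      then show False using anc_of_rt[of "pa u"] \<open>c \<noteq> pa u\<close> True by simp
    qed
  next
    case False
    have cu: "c \<noteq> u" using u anc_refl by auto
    then have "anc c a" using only[of c] c False anc_refl by auto
    then have c_pa: "anc c (pa u)" using anc_step[OF u(1)] au cu by auto
    show ?thesis
    proof (cases "pa u = rt")
      case True
      then show ?thesis using c_pa anc_of_rt False by auto
    next
      case False
      then have "pa u \<in> V - {rt}" using pa_V u by auto
      moreover have "pa u \<noteq> u" using pa_ne u by auto
      ultimately have "anc (pa u) a = anc (pa u) c" using only by blast
      then have "anc (pa u) c" using anc_pa au by simp
      then show ?thesis using anc_antisym c_pa c by auto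
    qed
  qed
  then have "{a, c} = ed u" using au unfolding ed_def by auto
  then show False using ne ed_E[OF u(1)] by simp
qed

lemma second_elem:
  assumes a: "a \<in> V" and c: "c \<in> V" and ne: "{a, c} \<notin> E"
    and u: "u \<in> V - {rt}" "anc u a \<noteq> anc u c"
  shows "\<exists>u' \<in> V - {rt}. u' \<noteq> u \<and> anc u' a \<noteq> anc u' c"
proof (cases "anc u a")
  case True
  then show ?thesis using second_elem_aux[OF a c ne u(1) True] u by auto
next
  case False
  have "{c, a} \<notin> E" using ne by (simp add: insert_commute)
  then show ?thesis using second_elem_aux[OF c a _ u(1)] u False by metis
qed

end

context rtree begin

lemma exchange_step:
  fixes w :: "'v set \<Rightarrow> real"
  assumes cyc: "\<And>a c u. a \<in> V \<Longrightarrow> c \<in> V \<Longrightarrow> a \<noteq> c \<Longrightarrow> {a, c} \<in> Efull \<Longrightarrow> {a, c} \<notin> E \<Longrightarrow>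
                  u \<in> V - {rt} \<Longrightarrow> anc u a \<noteq> anc u c \<Longrightarrow> w (ed u) < w {a, c}"
    and full: "E \<subseteq> Efull" "graph_on V Efull"
    and F: "is_spanning_tree V Efull F" and f: "f \<in> F" "f \<notin> E"
  shows "\<exists>F'. is_spanning_tree V Efull F' \<and> card (F' - E) < card (F - E) \<and> (\<Sum>e\<in>F'. w e) < (\<Sum>e\<in>F. w e)"
proof -
  have Ft: "is_tree V F" "F \<subseteq> Efull" using F unfolding is_spanning_tree_def by auto
  have Fg: "graph_on V F" "connected_on V F" "card F = card V - 1" using Ft(1) unfolding is_tree_def by auto
  have finF: "finite F" using graph_on_finite[OF Fg(1) finV] .
  obtain a c where ac: "a \<in> V" "c \<in> V" "a \<noteq> c" "f = {a, c}" using Fg(1) f unfolding graph_on_def by blast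
  define S where "S = {y. (a, y) \<in> (adj (F - {f}))\<^sup>*}"
  have aS: "a \<in> S" unfolding S_def by simp
  have cS: "c \<notin> S" unfolding S_def using tree_edge_disconn[OF Ft(1) f(1) ac(4)] by simp
  obtain w0 where w0: "w0 \<in> V - {rt}" "(w0 \<in> S) \<noteq> (pa w0 \<in> S)" "anc w0 a \<noteq> anc w0 c"
    using cut_path[OF ac(1,2), of S] aS cS by auto
  let ?e = "ed w0"
  have eE: "?e \<in> E" using ed_E[OF w0(1)] .
  have fEf: "{a, c} \<in> Efull" using Ft(2) f ac by auto
  have lt: "w ?e < w f" using cyc[OF ac(1,2,3) fEf _ w0(1) w0(3)] f(2) ac(4) by simp
  have adj_e: "(w0, pa w0) \<in> adj (insert ?e (F - {f}))" "(pa w0, w0) \<in> adj (insert ?e (F - {f}))"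
    unfolding ed_def by (auto simp: adj_iff insert_commute)
  have eF: "?e \<notin> F"
  proof
    assume "?e \<in> F"
    then have "?e \<in> F - {f}" using eE f(2) by auto
    then have "(w0, pa w0) \<in> adj (F - {f})" "(pa w0, w0) \<in> adj (F - {f})"
      unfolding ed_def by (auto simp: adj_iff insert_commute)
    then show False using w0(2) unfolding S_def by (auto intro: rtrancl_into_rtrancl)
  qed
  define F' where "F' = insert ?e (F - {f})"
  have sub: "F - {f} \<subseteq> F'" unfolding F'_def by auto
  have reach_a_or_c: "(a, y) \<in> (adj (F - {f}))\<^sup>* \<or> (c, y) \<in> (adj (F - {f}))\<^sup>*" if "y \<in> V" for y
  proof -
    have "(a, y) \<in> (adj F)\<^sup>*" using Fg(2) ac(1) that unfolding connected_on_def by auto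
    then show ?thesis using remove_edge_or[OF _ ac(4)] by blast
  qed
  have ac': "(a, c) \<in> (adj F')\<^sup>*"
  proof -
    obtain x1 x2 where x: "{x1, x2} = {w0, pa w0}" "x1 \<in> S" "x2 \<notin> S"
      using w0(2) by (cases "w0 \<in> S") (auto simp: insert_commute)
    have x2V: "x2 \<in> V" using x(1) w0(1) pa_V by (auto simp: doubleton_eq_iff)
    have cx2: "(c, x2) \<in> (adj (F - {f}))\<^sup>*" using reach_a_or_c[OF x2V] x(3) unfolding S_def by auto
    have ax1: "(a, x1) \<in> (adj F')\<^sup>*" using x(2) rtr_mono[OF sub] unfolding S_def by auto
    have x12: "(x1, x2) \<in> adj F'" using x(1) unfolding F'_def ed_def by (auto simp: adj_iff insert_commute)
    have x2c: "(x2, c) \<in> (adj F')\<^sup>*" using rtr_sym[OF rtr_mono[OF sub cx2]] .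
    show ?thesis using ax1 x12 x2c by (meson rtrancl_into_rtrancl rtrancl_trans)
  qed
  have conn': "connected_on V F'"
    unfolding connected_on_def
  proof (intro ballI)
    have ra: "(a, y) \<in> (adj F')\<^sup>*" if "y \<in> V" for y
      using reach_a_or_c[OF that]
    proof
      assume "(a, y) \<in> (adj (F - {f}))\<^sup>*" then show ?thesis using rtr_mono[OF sub] by blast
    next
      assume "(c, y) \<in> (adj (F - {f}))\<^sup>*"
      then have "(c, y) \<in> (adj F')\<^sup>*" using rtr_mono[OF sub] by blast
      then show ?thesis using ac' by (rule rtrancl_trans[rotated])
    qed
    fix y1 y2 assume "y1 \<in> V" "y2 \<in> V"
    then show "(y1, y2) \<in> (adj F')\<^sup>*" using ra rtr_sym by (meson rtrancl_trans)
  qed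
  have cardF': "card F' = card F"
    unfolding F'_def using eF finF f(1) by (simp add: card_Diff_singleton) (metis One_nat_def Suc_pred card_gt_0_iff empty_iff)
  have F'sub: "F' \<subseteq> Efull" unfolding F'_def using Ft(2) eE full(1) by auto
  have F'g: "graph_on V F'" using F'sub full(2) unfolding graph_on_def by auto
  have F'tree: "is_spanning_tree V Efull F'"
    unfolding is_spanning_tree_def is_tree_def using F'sub F'g conn' cardF' Fg(3) finV rtV by auto
  have "F' - E = (F - E) - {f}" unfolding F'_def using eE by auto
  moreover have "f \<in> F - E" "finite (F - E)" using f finF by auto
  ultimately have cardlt: "card (F' - E) < card (F - E)" using card_Diff1_less by metis
  have "(\<Sum>e\<in>F'. w e) = w ?e + (\<Sum>e\<in>F - {f}. w e)" unfolding F'_def using finF eF by simp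
  also have "(\<Sum>e\<in>F - {f}. w e) = (\<Sum>e\<in>F. w e) - w f" using finF f(1) by (simp add: sum_diff1)
  finally have "(\<Sum>e\<in>F'. w e) < (\<Sum>e\<in>F. w e)" using lt by simp
  then show ?thesis using F'tree cardlt by blast
qed

lemma unique_MST:
  fixes w :: "'v set \<Rightarrow> real"
  assumes cyc: "\<And>a c u. a \<in> V \<Longrightarrow> c \<in> V \<Longrightarrow> a \<noteq> c \<Longrightarrow> {a, c} \<in> Efull \<Longrightarrow> {a, c} \<notin> E \<Longrightarrow>
                  u \<in> V - {rt} \<Longrightarrow> anc u a \<noteq> anc u c \<Longrightarrow> w (ed u) < w {a, c}"
    and full: "E \<subseteq> Efull" "graph_on V Efull"
  shows "{F. is_MST V Efull w F} = {E}"
proof -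
  have strict: "is_spanning_tree V Efull F \<Longrightarrow> F \<noteq> E \<Longrightarrow> (\<Sum>e\<in>E. w e) < (\<Sum>e\<in>F. w e)" for F
  proof (induction "card (F - E)" arbitrary: F rule: less_induct)
    case less
    have Ft: "is_tree V F" using less.prems unfolding is_spanning_tree_def by auto
    have finF: "finite F" using Ft graph_on_finite finV unfolding is_tree_def by blast
    obtain f where f: "f \<in> F" "f \<notin> E"
    proof (rule ccontr)
      assume "\<not> thesis"
      then have "F \<subseteq> E" using that by blast
      moreover have "card F = card E" using Ft cardE unfolding is_tree_def by simp
      ultimately have "F = E" using card_subset_eq finE by blast
      then show False using less.prems by simp
    qed
    obtain F' where F': "is_spanning_tree V Efull F'" "card (F' - E) < card (F - E)" "(\<Sum>e\<in>F'. w e) < (\<Sum>e\<in>F. w e)"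
      using exchange_step[OF cyc full less.prems(1) f] by blast
    show ?case
    proof (cases "F' = E")
      case True then show ?thesis using F'(3) by simp
    next
      case False
      then show ?thesis using less.hyps[OF F'(2) F'(1) False] F'(3) by simp
    qed
  qed
  have Espan: "is_spanning_tree V Efull E" unfolding is_spanning_tree_def using full tree by simp
  have EMST: "is_MST V Efull w E"
    unfolding is_MST_def using Espan strict by (metis order.order_iff_strict)
  show ?thesis
  proof (rule set_eqI, rule iffI)
    fix F assume "F \<in> {F. is_MST V Efull w F}"
    then have "is_MST V Efull w F" by simp
    then have "is_spanning_tree V Efull F" "(\<Sum>e\<in>F. w e) \<le> (\<Sum>e\<in>E. w e)" using Espan unfolding is_MST_def by auto
    then show "F \<in> {E}" using strict by force
  next
    fix F assume "F \<in> {E}" then show "F \<in> {F. is_MST V Efull w F}" using EMST by simp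
  qed
qed

end

context prob_space begin

definition L2 :: "('a \<Rightarrow> real) \<Rightarrow> bool" where
  "L2 f \<longleftrightarrow> f \<in> borel_measurable M \<and> integrable M (\<lambda>\<omega>. (f \<omega>)\<^sup>2)"

lemma L2_int: "L2 f \<Longrightarrow> integrable M f"
  unfolding L2_def using square_integrable_imp_integrable by blast

lemma L2_prod: "L2 f \<Longrightarrow> L2 g \<Longrightarrow> integrable M (\<lambda>\<omega>. f \<omega> * g \<omega>)"
proof -
  assume f: "L2 f" and g: "L2 g"
  have i: "integrable M (\<lambda>\<omega>. (f \<omega>)\<^sup>2 + (g \<omega>)\<^sup>2)" using f g unfolding L2_def by auto
  show ?thesis
  proof (rule Bochner_Integration.integrable_bound[OF i])
    show "(\<lambda>\<omega>. f \<omega> * g \<omega>) \<in> borel_measurable M" using f g unfolding L2_def by auto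
    show "AE \<omega> in M. norm (f \<omega> * g \<omega>) \<le> norm ((f \<omega>)\<^sup>2 + (g \<omega>)\<^sup>2)"
    proof (rule AE_I2)
      fix \<omega>
      have "\<bar>f \<omega> * g \<omega>\<bar> \<le> (f \<omega>)\<^sup>2 + (g \<omega>)\<^sup>2"
      proof -
        have "0 \<le> (\<bar>f \<omega>\<bar> - \<bar>g \<omega>\<bar>)\<^sup>2" by simp
        then have "2 * (\<bar>f \<omega>\<bar> * \<bar>g \<omega>\<bar>) \<le> \<bar>f \<omega>\<bar>\<^sup>2 + \<bar>g \<omega>\<bar>\<^sup>2"
          by (simp add: power2_diff)
        moreover have "0 \<le> \<bar>f \<omega>\<bar> * \<bar>g \<omega>\<bar>" by simp
        ultimately have "\<bar>f \<omega>\<bar> * \<bar>g \<omega>\<bar> \<le> \<bar>f \<omega>\<bar>\<^sup>2 + \<bar>g \<omega>\<bar>\<^sup>2" by linarith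
        then show ?thesis by (simp add: abs_mult)
      qed
      then show "norm (f \<omega> * g \<omega>) \<le> norm ((f \<omega>)\<^sup>2 + (g \<omega>)\<^sup>2)" by simp
    qed
  qed
qed

lemma L2_add: "L2 f \<Longrightarrow> L2 g \<Longrightarrow> L2 (\<lambda>\<omega>. f \<omega> + g \<omega>)"
proof -
  assume f: "L2 f" and g: "L2 g"
  have "integrable M (\<lambda>\<omega>. (f \<omega>)\<^sup>2 + 2 * (f \<omega> * g \<omega>) + (g \<omega>)\<^sup>2)"
    using f g L2_prod[OF f g] unfolding L2_def by auto
  moreover have "(\<lambda>\<omega>. (f \<omega> + g \<omega>)\<^sup>2) = (\<lambda>\<omega>. (f \<omega>)\<^sup>2 + 2 * (f \<omega> * g \<omega>) + (g \<omega>)\<^sup>2)"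
    by (auto simp: power2_eq_square algebra_simps)
  ultimately show ?thesis using f g unfolding L2_def by auto
qed

lemma L2_cmul: "L2 f \<Longrightarrow> L2 (\<lambda>\<omega>. c * f \<omega>)"
proof -
  assume f: "L2 f"
  have "(\<lambda>\<omega>. (c * f \<omega>)\<^sup>2) = (\<lambda>\<omega>. c\<^sup>2 * (f \<omega>)\<^sup>2)" by (simp add: power_mult_distrib)
  then show ?thesis using f unfolding L2_def by auto
qed

lemma L2_const: "L2 (\<lambda>\<omega>. c)"
  unfolding L2_def by auto

lemma L2_sub_const: "L2 f \<Longrightarrow> L2 (\<lambda>\<omega>. f \<omega> - c)"
  using L2_add[OF _ L2_const[of "- c"]] by simp

lemma L2_sum: "finite D \<Longrightarrow> (\<And>d. d \<in> D \<Longrightarrow> L2 (f d)) \<Longrightarrow> L2 (\<lambda>\<omega>. \<Sum>d\<in>D. f d \<omega>)"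
proof (induction D rule: finite_induct)
  case empty then show ?case using L2_const[of 0] by simp
next
  case (insert d D)
  then show ?case using L2_add[of "f d" "\<lambda>\<omega>. \<Sum>d\<in>D. f d \<omega>"] by simp
qed

lemma int4:
  fixes f1 f2 f3 f4 :: "'a \<Rightarrow> real"
  assumes "integrable M f1" "integrable M f2" "integrable M f3" "integrable M f4"
  shows "(\<integral>\<omega>. a1 * f1 \<omega> + a2 * f2 \<omega> + a3 * f3 \<omega> + a4 * f4 \<omega> \<partial>M)
       = a1 * (\<integral>\<omega>. f1 \<omega> \<partial>M) + a2 * (\<integral>\<omega>. f2 \<omega> \<partial>M) + a3 * (\<integral>\<omega>. f3 \<omega> \<partial>M) + a4 * (\<integral>\<omega>. f4 \<omega> \<partial>M)"
proof -
  have i: "integrable M (\<lambda>\<omega>. a1 * f1 \<omega>)" "integrable M (\<lambda>\<omega>. a2 * f2 \<omega>)"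
    "integrable M (\<lambda>\<omega>. a3 * f3 \<omega>)" "integrable M (\<lambda>\<omega>. a4 * f4 \<omega>)" using assms by auto
  have "(\<integral>\<omega>. a1 * f1 \<omega> + a2 * f2 \<omega> + a3 * f3 \<omega> + a4 * f4 \<omega> \<partial>M)
     = (\<integral>\<omega>. a1 * f1 \<omega> + a2 * f2 \<omega> + a3 * f3 \<omega> \<partial>M) + (\<integral>\<omega>. a4 * f4 \<omega> \<partial>M)"
    using i by (intro Bochner_Integration.integral_add) auto
  also have "(\<integral>\<omega>. a1 * f1 \<omega> + a2 * f2 \<omega> + a3 * f3 \<omega> \<partial>M)
     = (\<integral>\<omega>. a1 * f1 \<omega> + a2 * f2 \<omega> \<partial>M) + (\<integral>\<omega>. a3 * f3 \<omega> \<partial>M)"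
    using i by (intro Bochner_Integration.integral_add) auto
  also have "(\<integral>\<omega>. a1 * f1 \<omega> + a2 * f2 \<omega> \<partial>M)
     = (\<integral>\<omega>. a1 * f1 \<omega> \<partial>M) + (\<integral>\<omega>. a2 * f2 \<omega> \<partial>M)"
    using i by (intro Bochner_Integration.integral_add) auto
  finally show ?thesis by (simp add: integral_mult_right_zero)
qed

lemma cov_swap: "cov M f g = cov M g f"
  unfolding cov_def by (simp add: mult.commute)

lemma cov_sq_nonneg: "cov M f f \<ge> 0"
  unfolding cov_def by simp

lemma centered_sum:
  assumes fin: "finite D" and L: "\<And>d. d \<in> D \<Longrightarrow> L2 (p d) \<and> L2 (q d)"
  shows "(\<Sum>d\<in>D. A d * p d \<omega> + B d * q d \<omega>) - (\<integral>\<omega>'. (\<Sum>d\<in>D. A d * p d \<omega>' + B d * q d \<omega>') \<partial>M)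
     = (\<Sum>d\<in>D. A d * (p d \<omega> - (\<integral>\<omega>'. p d \<omega>' \<partial>M)) + B d * (q d \<omega> - (\<integral>\<omega>'. q d \<omega>' \<partial>M)))"
proof -
  have "(\<integral>\<omega>'. (\<Sum>d\<in>D. A d * p d \<omega>' + B d * q d \<omega>') \<partial>M)
      = (\<Sum>d\<in>D. (\<integral>\<omega>'. A d * p d \<omega>' + B d * q d \<omega>' \<partial>M))"
    by (rule Bochner_Integration.integral_sum) (use L L2_int in auto)
  also have "\<dots> = (\<Sum>d\<in>D. A d * (\<integral>\<omega>'. p d \<omega>' \<partial>M) + B d * (\<integral>\<omega>'. q d \<omega>' \<partial>M))"
    by (rule sum.cong) (use L L2_int in auto)
  finally show ?thesis by (simp add: sum_subtractf[symmetric] algebra_simps)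
qed

lemma second_moment:
  assumes fin: "finite D" and L: "\<And>d. d \<in> D \<Longrightarrow> L2 (p d) \<and> L2 (q d)"
    and off: "\<And>d d'. d \<in> D \<Longrightarrow> d' \<in> D \<Longrightarrow> d \<noteq> d' \<Longrightarrow>
        cov M (p d) (p d') = 0 \<and> cov M (q d) (q d') = 0 \<and> cov M (q d) (p d') = 0"
  shows "(\<integral>\<omega>. (\<Sum>d\<in>D. a d * (p d \<omega> - (\<integral>\<omega>'. p d \<omega>' \<partial>M)) + b d * (q d \<omega> - (\<integral>\<omega>'. q d \<omega>' \<partial>M)))\<^sup>2 \<partial>M)
    = (\<Sum>d\<in>D. (a d)\<^sup>2 * cov M (p d) (p d) + (b d)\<^sup>2 * cov M (q d) (q d) + 2 * a d * b d * cov M (p d) (q d))"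
proof -
  define pt where "pt d \<omega> = p d \<omega> - (\<integral>\<omega>'. p d \<omega>' \<partial>M)" for d \<omega>
  define qt where "qt d \<omega> = q d \<omega> - (\<integral>\<omega>'. q d \<omega>' \<partial>M)" for d \<omega>
  define Y where "Y d \<omega> = a d * pt d \<omega> + b d * qt d \<omega>" for d \<omega>
  have Lt: "L2 (pt d)" "L2 (qt d)" if "d \<in> D" for d
    using L[OF that] L2_sub_const unfolding pt_def qt_def by auto
  have covp: "cov M (p d) (p d') = (\<integral>\<omega>. pt d \<omega> * pt d' \<omega> \<partial>M)"
    and covq: "cov M (q d) (q d') = (\<integral>\<omega>. qt d \<omega> * qt d' \<omega> \<partial>M)"
    and covpq: "cov M (p d) (q d') = (\<integral>\<omega>. pt d \<omega> * qt d' \<omega> \<partial>M)"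
    and covqp: "cov M (q d) (p d') = (\<integral>\<omega>. qt d \<omega> * pt d' \<omega> \<partial>M)" for d d'
    unfolding cov_def pt_def qt_def by simp_all
  have YY: "(\<integral>\<omega>. Y d \<omega> * Y d' \<omega> \<partial>M) =
      a d * a d' * cov M (p d) (p d') + a d * b d' * cov M (p d) (q d')
      + b d * a d' * cov M (q d) (p d') + b d * b d' * cov M (q d) (q d')"
    if "d \<in> D" "d' \<in> D" for d d'
  proof -
    have "(\<lambda>\<omega>. Y d \<omega> * Y d' \<omega>) = (\<lambda>\<omega>. (a d * a d') * (pt d \<omega> * pt d' \<omega>) + (a d * b d') * (pt d \<omega> * qt d' \<omega>)
       + (b d * a d') * (qt d \<omega> * pt d' \<omega>) + (b d * b d') * (qt d \<omega> * qt d' \<omega>))"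
      unfolding Y_def by (auto simp: algebra_simps)
    then have "(\<integral>\<omega>. Y d \<omega> * Y d' \<omega> \<partial>M) = (a d * a d') * (\<integral>\<omega>. pt d \<omega> * pt d' \<omega> \<partial>M)
       + (a d * b d') * (\<integral>\<omega>. pt d \<omega> * qt d' \<omega> \<partial>M)
       + (b d * a d') * (\<integral>\<omega>. qt d \<omega> * pt d' \<omega> \<partial>M) + (b d * b d') * (\<integral>\<omega>. qt d \<omega> * qt d' \<omega> \<partial>M)"
      using int4[OF L2_prod[OF Lt(1)[OF that(1)] Lt(1)[OF that(2)]] L2_prod[OF Lt(1)[OF that(1)] Lt(2)[OF that(2)]]
          L2_prod[OF Lt(2)[OF that(1)] Lt(1)[OF that(2)]] L2_prod[OF Lt(2)[OF that(1)] Lt(2)[OF that(2)]]]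
      by simp
    then show ?thesis unfolding covp covq covpq covqp .
  qed
  have LY: "L2 (Y d)" if "d \<in> D" for d
    unfolding Y_def using L2_add[OF L2_cmul[OF Lt(1)[OF that]] L2_cmul[OF Lt(2)[OF that]]] by simp
  have "(\<integral>\<omega>. (\<Sum>d\<in>D. Y d \<omega>)\<^sup>2 \<partial>M) = (\<integral>\<omega>. (\<Sum>d\<in>D. \<Sum>d'\<in>D. Y d \<omega> * Y d' \<omega>) \<partial>M)"
    by (simp add: power2_eq_square sum_product)
  also have "\<dots> = (\<Sum>d\<in>D. \<Sum>d'\<in>D. (\<integral>\<omega>. Y d \<omega> * Y d' \<omega> \<partial>M))"
  proof -
    have "(\<integral>\<omega>. (\<Sum>d\<in>D. \<Sum>d'\<in>D. Y d \<omega> * Y d' \<omega>) \<partial>M) = (\<Sum>d\<in>D. (\<integral>\<omega>. (\<Sum>d'\<in>D. Y d \<omega> * Y d' \<omega>) \<partial>M))"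
      by (rule Bochner_Integration.integral_sum) (use LY L2_prod in auto)
    also have "\<dots> = (\<Sum>d\<in>D. \<Sum>d'\<in>D. (\<integral>\<omega>. Y d \<omega> * Y d' \<omega> \<partial>M))"
      by (rule sum.cong[OF refl], rule Bochner_Integration.integral_sum) (use LY L2_prod in auto)
    finally show ?thesis .
  qed
  also have "\<dots> = (\<Sum>d\<in>D. \<Sum>d'\<in>D. if d = d' then (a d)\<^sup>2 * cov M (p d) (p d) + (b d)\<^sup>2 * cov M (q d) (q d) + 2 * a d * b d * cov M (p d) (q d) else 0)"
  proof (rule sum.cong[OF refl], rule sum.cong[OF refl])
    fix d d' assume d: "d \<in> D" and d': "d' \<in> D"
    show "(\<integral>\<omega>. Y d \<omega> * Y d' \<omega> \<partial>M) = (if d = d' then (a d)\<^sup>2 * cov M (p d) (p d) + (b d)\<^sup>2 * cov M (q d) (q d) + 2 * a d * b d * cov M (p d) (q d) else 0)"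
    proof (cases "d = d'")
      case True
      then show ?thesis using YY[OF d d'] cov_swap[of "q d" "p d"] by (simp add: power2_eq_square algebra_simps)
    next
      case False
      have "cov M (p d) (q d') = 0" using off[OF d' d] False cov_swap by metis
      then show ?thesis using YY[OF d d'] off[OF d d' False] False by simp
    qed
  qed
  also have "\<dots> = (\<Sum>d\<in>D. (a d)\<^sup>2 * cov M (p d) (p d) + (b d)\<^sup>2 * cov M (q d) (q d) + 2 * a d * b d * cov M (p d) (q d))"
    using fin by simp
  finally show ?thesis unfolding Y_def pt_def qt_def .
qed

end

definition Qf :: "real \<Rightarrow> real \<Rightarrow> real \<Rightarrow> real \<Rightarrow> real \<Rightarrow> real" where
  "Qf Vp Vq C a b = a\<^sup>2 * Vp + b\<^sup>2 * Vq + 2 * a * b * C"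

lemma Qf_neg: "Qf Vp Vq C (s * a) (s * b) = s\<^sup>2 * Qf Vp Vq C a b"
  unfolding Qf_def by (simp add: power2_eq_square algebra_simps)

lemma Qf_mono:
  assumes "0 \<le> Vp" "0 \<le> Vq" "0 \<le> C" "0 \<le> R" "R \<le> R'" "0 \<le> X" "X \<le> X'"
  shows "Qf Vp Vq C R X \<le> Qf Vp Vq C R' X'"
proof -
  have "R\<^sup>2 \<le> R'\<^sup>2" using assms by (simp add: power_mono)
  then have 1: "R\<^sup>2 * Vp \<le> R'\<^sup>2 * Vp" using assms by (simp add: mult_right_mono)
  have "X\<^sup>2 \<le> X'\<^sup>2" using assms by (simp add: power_mono)
  then have 2: "X\<^sup>2 * Vq \<le> X'\<^sup>2 * Vq" using assms by (simp add: mult_right_mono)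
  have "R * X \<le> R' * X'" using assms by (meson mult_mono order_trans)
  then have "R * X * C \<le> R' * X' * C" using assms by (simp add: mult_right_mono)
  then have 3: "2 * R * X * C \<le> 2 * R' * X' * C" by simp
  show ?thesis unfolding Qf_def using 1 2 3 by linarith
qed

lemma Qf_add:
  assumes "0 \<le> Vp" "0 \<le> Vq" "0 \<le> C" "0 \<le> R" "0 \<le> X" "0 < mr" "mr \<le> r'" "0 < mx" "mx \<le> x'"
    and "Vs \<le> Vp + Vq + 2 * C"
  shows "Qf Vp Vq C R X + min (mr\<^sup>2) (mx\<^sup>2) * Vs \<le> Qf Vp Vq C (R + r') (X + x')"
proof -
  let ?m = "min (mr\<^sup>2) (mx\<^sup>2)"
  have r'0: "0 \<le> r'" "0 \<le> x'" using assms by auto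
  have eq: "Qf Vp Vq C (R + r') (X + x') = Qf Vp Vq C R X + Qf Vp Vq C r' x'
       + (2 * R * r' * Vp + 2 * X * x' * Vq + 2 * (R * x' + r' * X) * C)"
    unfolding Qf_def by (simp add: power2_eq_square algebra_simps)
  have extra: "0 \<le> 2 * R * r' * Vp + 2 * X * x' * Vq + 2 * (R * x' + r' * X) * C"
    using assms r'0 by (intro add_nonneg_nonneg mult_nonneg_nonneg) auto
  have m1: "?m \<le> r'\<^sup>2"
  proof -
    have "mr\<^sup>2 \<le> r'\<^sup>2" using assms by (simp add: power_mono)
    then show ?thesis by simp
  qed
  have m2: "?m \<le> x'\<^sup>2"
  proof -
    have "mx\<^sup>2 \<le> x'\<^sup>2" using assms by (simp add: power_mono)
    then show ?thesis by simp
  qed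
  have m3: "?m \<le> r' * x'"
  proof -
    have "mr * mx \<le> r' * x'" using assms by (simp add: mult_mono)
    moreover have "?m \<le> mr * mx"
    proof (cases "mr \<le> mx")
      case True
      then have "mr * mr \<le> mr * mx" using assms by (simp add: mult_left_mono)
      then show ?thesis by (simp add: power2_eq_square min_le_iff_disj)
    next
      case False
      then have "mx * mx \<le> mr * mx" using assms by (simp add: mult_right_mono)
      then show ?thesis by (simp add: power2_eq_square min_le_iff_disj)
    qed
    ultimately show ?thesis by linarith
  qed
  have m0: "0 \<le> ?m" by simp
  have "?m * Vs \<le> ?m * (Vp + Vq + 2 * C)" using assms m0 by (simp add: mult_left_mono)
  also have "\<dots> = ?m * Vp + ?m * Vq + 2 * ?m * C" by (simp add: algebra_simps)
  also have "\<dots> \<le> r'\<^sup>2 * Vp + x'\<^sup>2 * Vq + 2 * (r' * x') * C"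
    using m1 m2 m3 assms by (intro add_mono mult_right_mono) auto
  also have "\<dots> = Qf Vp Vq C r' x'" unfolding Qf_def by (simp add: mult.assoc)
  finally show ?thesis using eq extra by linarith
qed


theorem theorem9:
  fixes V :: "'v set" and E Efull :: "'v set set" and rt :: 'v
    and r x :: "'v set \<Rightarrow> real" and M :: "'w measure"
    and p q :: "'v \<Rightarrow> 'w \<Rightarrow> real" and v0 :: real
    and phihat :: "'v set \<Rightarrow> real"
  assumes tree: "is_tree V E"
    and rt: "rt \<in> V" "degree E rt = 1"
    and r_pos: "\<forall>e\<in>E. r e > 0" and x_pos: "\<forall>e\<in>E. x e > 0"
    and prob: "prob_space M"
    and rv: "\<forall>d\<in>V - {rt}. p d \<in> borel_measurable M \<and> q d \<in> borel_measurable M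
               \<and> integrable M (\<lambda>\<omega>. (p d \<omega>)\<^sup>2) \<and> integrable M (\<lambda>\<omega>. (q d \<omega>)\<^sup>2)"
    and cov_offdiag: "\<forall>a\<in>V - {rt}. \<forall>b\<in>V - {rt}. a \<noteq> b \<longrightarrow>
               cov M (p a) (p b) = 0 \<and> cov M (q a) (q b) = 0 \<and> cov M (q a) (p b) = 0"
    and cov_diag: "\<forall>a\<in>V - {rt}. cov M (q a) (p a) \<ge> 0"
    and full: "E \<subseteq> Efull" "graph_on V Efull"
    and est: "\<forall>a\<in>V. \<forall>b\<in>V. a \<noteq> b \<longrightarrow>
               \<bar>phihat {a, b} - phi M (lcpf_voltage V rt E r x v0 p q) a b\<bar>
                 < k1 V rt E r x M p q / 2"
  shows "{F. is_MST V Efull phihat F} = {E}"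
proof -
  interpret rtree V E rt using tree rt(1) by unfold_locales
  interpret ps: prob_space M using prob .
  let ?V0 = "V - {rt}"
  let ?v = "lcpf_voltage V rt E r x v0 p q"
  define Vp where "Vp d = cov M (p d) (p d)" for d
  define Vq where "Vq d = cov M (q d) (q d)" for d
  define C where "C d = cov M (p d) (q d)" for d
  have fin0: "finite ?V0" using finV by auto
  have Ir: "inv_on ?V0 (red_laplacian V rt E r) = Ginv r" using inv_on_eq r_pos by blast
  have Ix: "inv_on ?V0 (red_laplacian V rt E x) = Ginv x" using inv_on_eq x_pos by blast
  have L: "ps.L2 (p d) \<and> ps.L2 (q d)" if "d \<in> ?V0" for d
    using rv that unfolding ps.L2_def by auto
  have cent: "?v a \<omega> - (\<integral>\<omega>'. ?v a \<omega>' \<partial>M) = (\<Sum>d\<in>?V0. Gm r a d * (p d \<omega> - (\<integral>\<omega>'. p d \<omega>' \<partial>M)) + Gm x a d * (q d \<omega> - (\<integral>\<omega>'. q d \<omega>' \<partial>M)))"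
    if a: "a \<in> V" for a \<omega>
  proof (cases "a = rt")
    case True
    have "?v a = (\<lambda>\<omega>. v0)" using True unfolding lcpf_voltage_def by auto
    moreover have "(\<integral>\<omega>'. v0 \<partial>M) = v0" using ps.prob_space by simp
    ultimately show ?thesis using True Gm_rt by simp
  next
    case False
    have "?v a = (\<lambda>\<omega>. \<Sum>d\<in>?V0. Gm r a d * p d \<omega> + Gm x a d * q d \<omega>)"
    proof
      fix \<omega>
      show "?v a \<omega> = (\<Sum>d\<in>?V0. Gm r a d * p d \<omega> + Gm x a d * q d \<omega>)"
        unfolding lcpf_voltage_def Ir Ix using False a by (simp add: Ginv_def)
    qed
    then show ?thesis using ps.centered_sum[OF fin0 L] by simp
  qed
  have phi_eq: "phi M ?v a c = (\<Sum>d\<in>?V0. Qf (Vp d) (Vq d) (C d) (Rp r a c d) (Rp x a c d))"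
    if a: "a \<in> V" and c: "c \<in> V" for a c
  proof -
    have "phi M ?v a c = (\<integral>\<omega>. (\<Sum>d\<in>?V0. (Gm r a d - Gm r c d) * (p d \<omega> - (\<integral>\<omega>'. p d \<omega>' \<partial>M))
            + (Gm x a d - Gm x c d) * (q d \<omega> - (\<integral>\<omega>'. q d \<omega>' \<partial>M)))\<^sup>2 \<partial>M)"
      unfolding phi_def cent[OF a] cent[OF c]
      by (simp add: sum_subtractf[symmetric] algebra_simps)
    also have "\<dots> = (\<Sum>d\<in>?V0. (Gm r a d - Gm r c d)\<^sup>2 * Vp d + (Gm x a d - Gm x c d)\<^sup>2 * Vq d
            + 2 * (Gm r a d - Gm r c d) * (Gm x a d - Gm x c d) * C d)"
      unfolding Vp_def Vq_def C_def
      by (rule ps.second_moment[OF fin0 L]) (use cov_offdiag in auto)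
    also have "\<dots> = (\<Sum>d\<in>?V0. Qf (Vp d) (Vq d) (C d) (Rp r a c d) (Rp x a c d))"
    proof (rule sum.cong[OF refl])
      fix d assume "d \<in> ?V0"
      obtain s :: real where s: "s = 1 \<or> s = -1" "\<forall>\<rho>. Gm \<rho> a d - Gm \<rho> c d = s * Rp \<rho> a c d"
        using Gm_diff_sign by blast
      have s2: "s\<^sup>2 = 1" using s(1) by auto
      have "(Gm r a d - Gm r c d)\<^sup>2 * Vp d + (Gm x a d - Gm x c d)\<^sup>2 * Vq d
            + 2 * (Gm r a d - Gm r c d) * (Gm x a d - Gm x c d) * C d
          = Qf (Vp d) (Vq d) (C d) (s * Rp r a c d) (s * Rp x a c d)"
        unfolding Qf_def using s(2) by simp
      also have "\<dots> = Qf (Vp d) (Vq d) (C d) (Rp r a c d) (Rp x a c d)" using Qf_neg s2 by simp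
      finally show "(Gm r a d - Gm r c d)\<^sup>2 * Vp d + (Gm x a d - Gm x c d)\<^sup>2 * Vq d
            + 2 * (Gm r a d - Gm r c d) * (Gm x a d - Gm x c d) * C d
          = Qf (Vp d) (Vq d) (C d) (Rp r a c d) (Rp x a c d)" .
    qed
    finally show ?thesis .
  qed
  have "{e \<in> E. rt \<in> e} \<noteq> {}" using rt(2) unfolding degree_def by (metis card.empty zero_neq_one)
  then have Ene: "E \<noteq> {}" by auto
  define mr where "mr = Min (r ` E)"
  define mx where "mx = Min (x ` E)"
  define Vs where "Vs d = cov M (p d) (p d) + cov M (q d) (q d) + 2 * cov M (p d) (q d)" for d
  have mr: "0 < mr" "\<And>e. e \<in> E \<Longrightarrow> mr \<le> r e"
  proof -
    have "mr \<in> r ` E" unfolding mr_def using finE Ene by (intro Min_in) auto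
    then show "0 < mr" using r_pos by auto
    show "\<And>e. e \<in> E \<Longrightarrow> mr \<le> r e" unfolding mr_def using finE by (intro Min_le) auto
  qed
  have mx: "0 < mx" "\<And>e. e \<in> E \<Longrightarrow> mx \<le> x e"
  proof -
    have "mx \<in> x ` E" unfolding mx_def using finE Ene by (intro Min_in) auto
    then show "0 < mx" using x_pos by auto
    show "\<And>e. e \<in> E \<Longrightarrow> mx \<le> x e" unfolding mx_def using finE by (intro Min_le) auto
  qed
  have k1_eq: "k1 V rt E r x M p q = min (mr\<^sup>2) (mx\<^sup>2) * Min (Vs ` ?V0)"
    unfolding k1_def mr_def mx_def Vs_def by simp
  have Vs_le: "Min (Vs ` ?V0) \<le> Vp d + Vq d + 2 * C d" if "d \<in> ?V0" for d
    using Min_le[of "Vs ` ?V0" "Vs d"] fin0 that unfolding Vs_def Vp_def Vq_def C_def by auto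
  have nonneg: "0 \<le> Vp d" "0 \<le> Vq d" "0 \<le> C d" if "d \<in> ?V0" for d
    unfolding Vp_def Vq_def C_def using ps.cov_sq_nonneg cov_diag that ps.cov_swap by auto
  have ineq: "phi M ?v (pa u) u + k1 V rt E r x M p q \<le> phi M ?v a c"
    if u: "u \<in> ?V0" and a: "a \<in> V" and c: "c \<in> V" and ne: "{a, c} \<notin> E" and uac: "anc u a \<noteq> anc u c" for u a c
  proof -
    obtain u' where u': "u' \<in> ?V0" "u' \<noteq> u" "anc u' a \<noteq> anc u' c" using second_elem[OF a c ne u uac] by blast
    define d0 where "d0 = (if anc u' u then u else u')"
    have d0: "d0 \<in> ?V0" "anc u' d0" using u u' anc_refl unfolding d0_def by auto
    define f where "f d = Qf (Vp d) (Vq d) (C d) (Rp r (pa u) u d) (Rp x (pa u) u d)" for d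
    define g where "g d = Qf (Vp d) (Vq d) (C d) (Rp r a c d) (Rp x a c d)" for d
    have R1: "Rp \<rho> (pa u) u d = (\<Sum>w\<in>(if anc u d then {u} else {}). \<rho> (ed w))" for \<rho> d
      using Rp_pa[OF u] by simp
    have fg: "f d \<le> g d" if d: "d \<in> ?V0" for d
    proof -
      have h: "Rp \<rho> (pa u) u d \<le> Rp \<rho> a c d" if pos: "\<forall>e\<in>E. \<rho> e > 0" for \<rho>
        unfolding R1 by (rule Rp_mono[OF pos]) (use u uac in auto)
      show ?thesis unfolding f_def g_def
        using Qf_mono[OF nonneg[OF d] Rp_nonneg[OF r_pos] h[OF r_pos] Rp_nonneg[OF x_pos] h[OF x_pos]] .
    qed
    have fg0: "f d0 + k1 V rt E r x M p q \<le> g d0"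
    proof -
      let ?W = "insert u' (if anc u d0 then {u} else {})"
      have W: "?W \<subseteq> {w \<in> V - {rt}. anc w d0 \<and> anc w a \<noteq> anc w c}" using u u' uac d0 by auto
      have sumW: "(\<Sum>w\<in>?W. \<rho> (ed w)) = Rp \<rho> (pa u) u d0 + \<rho> (ed u')" for \<rho>
        unfolding R1 using u'(2) by auto
      have gr: "Rp r (pa u) u d0 + r (ed u') \<le> Rp r a c d0"
        using Rp_mono[OF r_pos W] sumW by metis
      have gx: "Rp x (pa u) u d0 + x (ed u') \<le> Rp x a c d0"
        using Rp_mono[OF x_pos W] sumW by metis
      have "f d0 + k1 V rt E r x M p q \<le> Qf (Vp d0) (Vq d0) (C d0) (Rp r (pa u) u d0 + r (ed u')) (Rp x (pa u) u d0 + x (ed u'))"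
        unfolding f_def k1_eq
        by (rule Qf_add[OF nonneg[OF d0(1)] Rp_nonneg[OF r_pos] Rp_nonneg[OF x_pos] mr(1) mr(2)[OF ed_E[OF u'(1)]]
              mx(1) mx(2)[OF ed_E[OF u'(1)]] Vs_le[OF d0(1)]])
      also have "\<dots> \<le> g d0" unfolding g_def
      proof (rule Qf_mono[OF nonneg[OF d0(1)] _ gr _ gx])
        show "0 \<le> Rp r (pa u) u d0 + r (ed u')" using Rp_nonneg[OF r_pos] mr(1) mr(2)[OF ed_E[OF u'(1)]]
          by (meson add_nonneg_nonneg less_le_trans less_imp_le)
        show "0 \<le> Rp x (pa u) u d0 + x (ed u')" using Rp_nonneg[OF x_pos] mx(1) mx(2)[OF ed_E[OF u'(1)]]
          by (meson add_nonneg_nonneg less_le_trans less_imp_le)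
      qed
      finally show ?thesis .
    qed
    have uV: "u \<in> V" using u by simp
    have "phi M ?v (pa u) u = (\<Sum>d\<in>?V0. f d)" unfolding phi_eq[OF pa_V[OF uV] uV] f_def ..
    also have "\<dots> = f d0 + (\<Sum>d\<in>?V0 - {d0}. f d)" using sum.remove[OF fin0 d0(1)] by simp
    finally have pf: "phi M ?v (pa u) u = f d0 + (\<Sum>d\<in>?V0 - {d0}. f d)" .
    have "phi M ?v a c = (\<Sum>d\<in>?V0. g d)" unfolding phi_eq[OF a c] g_def ..
    also have "\<dots> = g d0 + (\<Sum>d\<in>?V0 - {d0}. g d)" using sum.remove[OF fin0 d0(1)] by simp
    finally have pg: "phi M ?v a c = g d0 + (\<Sum>d\<in>?V0 - {d0}. g d)" .
    have "(\<Sum>d\<in>?V0 - {d0}. f d) \<le> (\<Sum>d\<in>?V0 - {d0}. g d)" using fg by (intro sum_mono) auto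
    then show ?thesis using pf pg fg0 by linarith
  qed
  have cyc: "phihat (ed u) < phihat {a, c}"
    if a: "a \<in> V" and c: "c \<in> V" and ac: "a \<noteq> c" and ne: "{a, c} \<notin> E"
      and u: "u \<in> ?V0" and uac: "anc u a \<noteq> anc u c" for a c u
  proof -
    have uV: "u \<in> V" "pa u \<in> V" "pa u \<noteq> u" using u pa_V pa_ne by auto
    have e1: "\<bar>phihat {pa u, u} - phi M ?v (pa u) u\<bar> < k1 V rt E r x M p q / 2"
      using est[rule_format, OF uV(2) uV(1) uV(3)] .
    have e2: "\<bar>phihat {a, c} - phi M ?v a c\<bar> < k1 V rt E r x M p q / 2"
      using est[rule_format, OF a c ac] .
    have "ed u = {pa u, u}" unfolding ed_def ..
    then show ?thesis using e1 e2 ineq[OF u a c ne uac] by (simp only:)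
  qed
  show ?thesis by (rule unique_MST[OF cyc full]) auto
qed


end
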